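(* Let $A\in\mathbb R^{m\times n}$, $D\in\mathbb R^{r\times n}$, $a\in\mathbb R^m$, $\lambda,\mu\in\mathbb R^r$ with $\lambda,\mu>0$, and let $\Omega$ be either $\mathbb R^n_+$ or $\{x:0\le x\le\gamma\}$ for some $\gamma\in\mathbb R^n$ with $\gamma>0$. Then the primal problem $$\min_{x\in\Omega}\ \tfrac12\|Ax-a\|^2+\sum_{i=1}^r\lambda_i\mathbf 1_{\{(Dx)_i\neq0\}}$$ has a global minimizer, and the corresponding dual problem has a global minimizer, where the dual problem is $$\min_{y\in\mathbb R^m,z\in\mathbb R^r}\ \big\langle\max\{-A^\top y-D^\top z,0\},\gamma\big\rangle+\tfrac12\|y\|^2+\langle a,y\rangle+\Psi_{0,\mu}(z)$$ when $\Omega=\{x:0\le x\le\gamma\}$ (max taken componentwise), and $$\min_{y\in\mathbb R^m,z\in\mathbb R^r}\ \tfrac12\|y\|^2+\langle a,y\rangle+\Psi_{0,\mu}(z)\quad\text{s.t.}\quad A^\top y+D^\top z\ge0$$ when $\Omega=\mathbb R^n_+$.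
   Context: $\Psi_{0,\mu}(z)=\sum_{i=1}^r\mu_i\mathbf 1_{\{z_i\ne0\}}$, where $\mathbf 1_{\{\cdot\}}$ is $1$ if the condition holds and $0$ otherwise. Vector inequalities are componentwise. *)

theory Defs
  imports "HOL-Analysis.Analysis"
begin

definition Psi0 :: "real^'r \<Rightarrow> real^'r \<Rightarrow> real" where
  "Psi0 mu z = (\<Sum>i\<in>UNIV. mu $ i * (if z $ i \<noteq> 0 then 1 else 0))"

definition primal_obj :: "real^'n^'m \<Rightarrow> real^'m \<Rightarrow> real^'n^'r \<Rightarrow> real^'r \<Rightarrow> real^'n \<Rightarrow> real" where
  "primal_obj A a D lam x = (1/2) * (norm (A *v x - a))\<^sup>2 + Psi0 lam (D *v x)"

definition nonneg_orthant :: "(real^'n) set" where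
  "nonneg_orthant = {x. \<forall>j. 0 \<le> x $ j}"

definition box_set :: "real^'n \<Rightarrow> (real^'n) set" where
  "box_set gam = {x. \<forall>j. 0 \<le> x $ j \<and> x $ j \<le> gam $ j}"

definition dual_obj_box :: "real^'n^'m \<Rightarrow> real^'m \<Rightarrow> real^'n^'r \<Rightarrow> real^'r \<Rightarrow> real^'n
    \<Rightarrow> real^'m \<Rightarrow> real^'r \<Rightarrow> real" where
  "dual_obj_box A a D mu gam y z =
     (\<Sum>j\<in>UNIV. max (- (transpose A *v y) $ j - (transpose D *v z) $ j) 0 * gam $ j)
     + (1/2) * (norm y)\<^sup>2 + a \<bullet> y + Psi0 mu z"

definition dual_obj_orth :: "real^'m \<Rightarrow> real^'r \<Rightarrow> real^'m \<Rightarrow> real^'r \<Rightarrow> real" where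
  "dual_obj_orth a mu y z = (1/2) * (norm y)\<^sup>2 + a \<bullet> y + Psi0 mu z"

definition dual_feas_orth :: "real^'n^'m \<Rightarrow> real^'n^'r \<Rightarrow> ((real^'m) \<times> (real^'r)) set" where
  "dual_feas_orth A D = {(y, z). \<forall>j. 0 \<le> (transpose A *v y + transpose D *v z) $ j}"

definition has_global_min :: "('a \<Rightarrow> real) \<Rightarrow> 'a set \<Rightarrow> bool" where
  "has_global_min f S \<longleftrightarrow> (\<exists>x\<in>S. \<forall>x'\<in>S. f x \<le> f x')"

end

theory Submission
  imports Defs
begin

lemma psi_eq: "Psi0 mu v = (\<Sum>i\<in>-{i. v$i = 0}. mu$i)"
proof -
  have "Psi0 mu v = (\<Sum>i\<in>UNIV. if v$i \<noteq> 0 then mu$i else 0)"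
    unfolding Psi0_def by (rule sum.cong) auto
  also have "\<dots> = (\<Sum>i\<in>{i\<in>UNIV. v$i \<noteq> 0}. mu$i)"
    by (rule sum.inter_filter[symmetric]) simp
  also have "{i\<in>UNIV. v$i \<noteq> 0} = -{i. v$i = 0}" by auto
  finally show ?thesis .
qed

lemma decomp:
  fixes g :: "'a \<Rightarrow> real" and L :: "'a \<Rightarrow> real^'r" and mu :: "real^'r"
  assumes mu: "\<forall>i. 0 \<le> mu$i"
  and ex: "\<And>T. \<exists>x\<in>S. (\<forall>i\<in>T. L x $ i = 0) \<and> (\<forall>x'\<in>S. (\<forall>i\<in>T. L x' $ i = 0) \<longrightarrow> g x \<le> g x')"
  shows "has_global_min (\<lambda>x. g x + Psi0 mu (L x)) S"
proof -
  obtain xT where xT: "\<And>T. xT T \<in> S \<and> (\<forall>i\<in>T. L (xT T) $ i = 0) \<and> (\<forall>x'\<in>S. (\<forall>i\<in>T. L x' $ i = 0) \<longrightarrow> g (xT T) \<le> g x')"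
    using ex by metis
  define c where "c T = g (xT T) + (\<Sum>i\<in>-T. mu$i)" for T :: "'r set"
  have fin: "finite (range c)" by simp
  obtain T0 where T0: "c T0 = Min (range c)"
    using Min_in[OF fin] by (metis imageE rangeI empty_iff)
  have T0le: "c T0 \<le> c T" for T using T0 fin by simp
  define x0 where "x0 = xT T0"
  have psi0: "Psi0 mu (L x0) \<le> (\<Sum>i\<in>-T0. mu$i)"
    unfolding psi_eq
    by (rule sum_mono2) (use xT mu in \<open>auto simp: x0_def\<close>)
  show ?thesis unfolding has_global_min_def
  proof (intro bexI ballI)
    show "x0 \<in> S" using xT x0_def by simp
    fix x assume x: "x \<in> S"
    define Z where "Z = {i. L x $ i = 0}"
    have "g x0 + Psi0 mu (L x0) \<le> c T0" using psi0 by (simp add: c_def x0_def)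
    also have "\<dots> \<le> c Z" by (rule T0le)
    also have "\<dots> \<le> g x + Psi0 mu (L x)"
      using xT[of Z] x by (auto simp: c_def psi_eq Z_def)
    finally show "g x0 + Psi0 mu (L x0) \<le> g x + Psi0 mu (L x)" .
  qed
qed

lemma min_coercive:
  fixes F :: "'a::{heine_borel,real_normed_vector} \<Rightarrow> real"
  assumes "closed S" "x0 \<in> S" "continuous_on S F"
    and B: "\<And>x. x\<in>S \<Longrightarrow> F x \<le> F x0 \<Longrightarrow> norm x \<le> B"
  shows "\<exists>x\<in>S. \<forall>x'\<in>S. F x \<le> F x'"
proof -
  let ?K = "S \<inter> cball 0 B"
  have "compact ?K" using assms(1) by (simp add: compact_eq_bounded_closed closed_Int bounded_Int)
  moreover have "x0 \<in> ?K" using B[of x0] assms(2) by simp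
  moreover have "continuous_on ?K F" using assms(3) continuous_on_subset by blast
  ultimately obtain x1 where x1: "x1 \<in> ?K" "\<forall>y\<in>?K. F x1 \<le> F y"
    using continuous_attains_inf[of ?K F] by blast
  show ?thesis
  proof (intro bexI ballI)
    show "x1 \<in> S" using x1 by simp
    fix x' assume x': "x' \<in> S"
    show "F x1 \<le> F x'"
    proof (cases "F x' \<le> F x0")
      case True then show ?thesis using B[OF x'] x' x1 by simp
    next
      case False
      have "F x1 \<le> F x0" using x1 \<open>x0 \<in> ?K\<close> by blast
      then show ?thesis using False by linarith
    qed
  qed
qed

lemma closed_image_cone:
  fixes P :: "(real^'k) set" and f :: "real^'k \<Rightarrow> 'b::euclidean_space"
  assumes "polyhedron P" "conic P" "\<And>x i. x\<in>P \<Longrightarrow> 0 \<le> x$i" "linear f"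
  shows "closed (f ` P)"
proof -
  define w :: "real^'k" where "w = (\<chi> i. 1)"
  have wx: "w \<bullet> x = (\<Sum>i\<in>UNIV. x$i)" for x by (simp add: w_def inner_vec_def)
  define B where "B = P \<inter> {x. w \<bullet> x \<le> 1}"
  have "polyhedron B" unfolding B_def by (rule polyhedron_Int[OF assms(1) polyhedron_halfspace_le])
  moreover have "bounded B"
    unfolding bounded_iff
  proof (intro exI ballI)
    fix x assume x: "x\<in>B"
    have "norm x \<le> (\<Sum>i\<in>UNIV. \<bar>x$i\<bar>)" by (rule norm_le_l1_cart)
    also have "\<dots> = w\<bullet>x" using x assms(3) by (simp add: wx B_def)
    also have "\<dots> \<le> 1" using x by (simp add: B_def)
    finally show "norm x \<le> 1" .
  qed
  ultimately have "polytope B" by (simp add: polytope_eq_bounded_polyhedron)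
  then have "polytope (f ` B)" using polytope_linear_image assms(4) by blast
  then have cl: "closed (conic hull (f ` B))" by (simp add: closed_conic_hull_strong)
  have "conic hull B = P"
  proof
    show "conic hull B \<subseteq> P" by (rule hull_minimal) (auto simp: B_def assms(2))
    show "P \<subseteq> conic hull B"
    proof
      fix x assume x: "x \<in> P"
      show "x \<in> conic hull B"
      proof (cases "w \<bullet> x \<le> 1")
        case True then show ?thesis using x hull_subset[of B conic] by (auto simp: B_def)
      next
        case False
        define t where "t = w \<bullet> x"
        have t: "t > 1" using False t_def by simp
        have "inverse t *\<^sub>R x \<in> P" using assms(2) x t unfolding conic_def by simp
        moreover have "w \<bullet> (inverse t *\<^sub>R x) = 1" using t by (simp add: t_def)
        ultimately have "inverse t *\<^sub>R x \<in> B" by (simp add: B_def)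
        moreover have "x = t *\<^sub>R (inverse t *\<^sub>R x)" using t by simp
        ultimately show ?thesis unfolding conic_hull_explicit using t
          by (metis (mono_tags, lifting) less_le_not_le mem_Collect_eq order.trans zero_le_one)
      qed
    qed
  qed
  then show ?thesis using cl assms(4) by (simp add: conic_hull_linear_image)
qed


lemma polyhedron_all_le:
  fixes a :: "'i \<Rightarrow> 'a::euclidean_space"
  assumes "finite I"
  shows "polyhedron {x. \<forall>i\<in>I. a i \<bullet> x \<le> b i}"
proof -
  have "{x. \<forall>i\<in>I. a i \<bullet> x \<le> b i} = \<Inter> ((\<lambda>i. {x. a i \<bullet> x \<le> b i}) ` I)" by auto
  then show ?thesis using assms by (auto intro!: polyhedron_Inter polyhedron_halfspace_le)
qed

lemma polyhedron_all_eq: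
  fixes a :: "'i \<Rightarrow> 'a::euclidean_space"
  assumes "finite I"
  shows "polyhedron {x. \<forall>i\<in>I. a i \<bullet> x = b i}"
proof -
  have "{x. \<forall>i\<in>I. a i \<bullet> x = b i} = \<Inter> ((\<lambda>i. {x. a i \<bullet> x = b i}) ` I)" by auto
  then show ?thesis using assms by (auto intro!: polyhedron_Inter polyhedron_hyperplane)
qed

lemma mv_inner: "((D::real^'n^'r) *v x) $ i = D $ i \<bullet> x"
  by (simp add: matrix_vector_mult_def inner_vec_def mult.commute)

lemma mv_scale: "(D::real^'n^'r) *v (c *\<^sub>R x) = c *\<^sub>R (D *v x)"
  by (simp add: vec_eq_iff matrix_vector_mult_def sum_distrib_left algebra_simps)

lemma nth_inner: "(x::real^'k) $ i = axis i 1 \<bullet> x"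
  by (simp add: inner_axis')

lemma coerc_q:
  fixes y a :: "real^'m"
  assumes "(1/2)*(norm y)^2 + a \<bullet> y + s \<le> 0" "0 \<le> s"
  shows "norm y \<le> 2 * norm a" "s \<le> 2 * (norm a)^2"
proof -
  have cs: "\<bar>a \<bullet> y\<bar> \<le> norm a * norm y" by (rule Cauchy_Schwarz_ineq2)
  have h: "(norm y)^2 \<le> 2 * norm a * norm y" using assms cs by (simp add: abs_le_iff)
  show ny: "norm y \<le> 2 * norm a"
  proof (cases "norm y = 0")
    case True then show ?thesis by simp
  next
    case False
    then have "norm y > 0" by simp
    then show ?thesis using h by (simp add: power2_eq_square)
  qed
  have "-(a \<bullet> y) \<le> norm a * norm y" using cs by linarith
  then have "s \<le> norm a * norm y" using assms zero_le_power2[of "norm y"] by linarith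
  also have "\<dots> \<le> norm a * (2 * norm a)" using ny by (simp add: mult_left_mono)
  finally show "s \<le> 2 * (norm a)^2" by (simp add: power2_eq_square)
qed

lemma primal_orth:
  fixes A :: "real^'n^'m" and D :: "real^'n^'r" and a :: "real^'m" and lam :: "real^'r"
  assumes "\<forall>i. 0 \<le> lam $ i"
  shows "has_global_min (primal_obj A a D lam) nonneg_orthant"
proof -
  have eq: "primal_obj A a D lam = (\<lambda>x. (1/2) * (norm (A *v x - a))\<^sup>2 + Psi0 lam (D *v x))"
    by (simp add: fun_eq_iff primal_obj_def)
  show ?thesis unfolding eq
  proof (rule decomp[OF assms])
    fix T :: "'r set"
    define P where "P = {x::real^'n. (\<forall>j. 0 \<le> x$j) \<and> (\<forall>i\<in>T. (D *v x)$i = 0)}"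
    have PS: "P = {x \<in> nonneg_orthant. \<forall>i\<in>T. (D *v x)$i = 0}"
      by (auto simp: P_def nonneg_orthant_def)
    have eqP: "P = {x. \<forall>j\<in>UNIV. (- axis j 1) \<bullet> x \<le> (0::real)} \<inter> {x. \<forall>i\<in>T. D$i \<bullet> x = 0}"
      by (auto simp: P_def mv_inner inner_axis')
    have p1: "polyhedron {x::real^'n. \<forall>j\<in>UNIV. (- axis j 1) \<bullet> x \<le> (0::real)}"
      by (rule polyhedron_all_le) simp
    have p2: "polyhedron {x::real^'n. \<forall>i\<in>T. D$i \<bullet> x = 0}"
      by (rule polyhedron_all_eq) simp
    have polyP: "polyhedron P" unfolding eqP by (rule polyhedron_Int[OF p1 p2])
    have conP: "conic P" unfolding conic_def P_def
      by (auto simp: mv_scale)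
    have cl: "closed ((\<lambda>x. A *v x) ` P)"
      by (rule closed_image_cone[OF polyP conP]) (auto simp: P_def)
    have "0 \<in> P" by (simp add: P_def)
    then have 0: "0 \<in> (\<lambda>x. A *v x) ` P" by (rule rev_image_eqI) simp
    obtain u where u: "u \<in> (\<lambda>x. A *v x) ` P"
      "\<forall>u'\<in>(\<lambda>x. A *v x) ` P. (1/2) * (norm (u - a))\<^sup>2 \<le> (1/2) * (norm (u' - a))\<^sup>2"
    proof -
      have "\<exists>u\<in>(\<lambda>x. A *v x) ` P. \<forall>u'\<in>(\<lambda>x. A *v x) ` P. (1/2) * (norm (u - a))\<^sup>2 \<le> (1/2) * (norm (u' - a))\<^sup>2"
      proof (rule min_coercive[OF cl 0, where B="2 * norm a"])
        show "continuous_on ((\<lambda>x. A *v x) ` P) (\<lambda>u. (1/2) * (norm (u - a))\<^sup>2)"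
          by (intro continuous_intros)
        fix u assume "(1/2) * (norm (u - a))\<^sup>2 \<le> (1/2) * (norm (0 - a))\<^sup>2"
        then have "(norm (u - a))\<^sup>2 \<le> (norm a)\<^sup>2" by simp
        then have "norm (u - a) \<le> norm a" by (rule power2_le_imp_le[OF _ norm_ge_zero])
        moreover have "norm u \<le> norm (u - a) + norm a" using norm_triangle_sub[of u a] by simp
        ultimately show "norm u \<le> 2 * norm a" by simp
      qed
      then show ?thesis using that by blast
    qed
    then obtain x where x: "x \<in> P" "u = A *v x" by blast
    show "\<exists>x\<in>nonneg_orthant. (\<forall>i\<in>T. (D *v x) $ i = 0) \<and>
          (\<forall>x'\<in>nonneg_orthant. (\<forall>i\<in>T. (D *v x') $ i = 0) \<longrightarrow>
             1 / 2 * (norm (A *v x - a))\<^sup>2 \<le> 1 / 2 * (norm (A *v x' - a))\<^sup>2)"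
    proof (rule bexI[where x=x], intro conjI ballI impI)
      show "x \<in> nonneg_orthant" using x PS by auto
      show "(D *v x) $ i = 0" if "i \<in> T" for i using x PS that by auto
      fix x' assume "x' \<in> nonneg_orthant" "\<forall>i\<in>T. (D *v x') $ i = 0"
      then have "x' \<in> P" using PS by blast
      then have "A *v x' \<in> (\<lambda>x. A *v x) ` P" by blast
      then show "1 / 2 * (norm (A *v x - a))\<^sup>2 \<le> 1 / 2 * (norm (A *v x' - a))\<^sup>2"
        using u(2) x(2) by blast
    qed
  qed
qed

lemma primal_box:
  fixes A :: "real^'n^'m" and D :: "real^'n^'r" and a :: "real^'m" and lam :: "real^'r"
  assumes "\<forall>i. 0 \<le> lam $ i" "\<forall>j. gam $ j > 0"
  shows "has_global_min (primal_obj A a D lam) (box_set gam)"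
proof -
  have eq: "primal_obj A a D lam = (\<lambda>x. (1/2) * (norm (A *v x - a))\<^sup>2 + Psi0 lam (D *v x))"
    by (simp add: fun_eq_iff primal_obj_def)
  show ?thesis unfolding eq
  proof (rule decomp[OF assms(1)])
    fix T :: "'r set"
    define P where "P = {x::real^'n. (\<forall>j. 0 \<le> x$j \<and> x$j \<le> gam$j) \<and> (\<forall>i\<in>T. (D *v x)$i = 0)}"
    have PS: "P = {x \<in> box_set gam. \<forall>i\<in>T. (D *v x)$i = 0}"
      by (auto simp: P_def box_set_def)
    have eqP: "P = {x. \<forall>j\<in>UNIV. (- axis j 1) \<bullet> x \<le> (0::real)} \<inter> {x. \<forall>j\<in>UNIV. axis j 1 \<bullet> x \<le> gam$j}
       \<inter> {x. \<forall>i\<in>T. D$i \<bullet> x = 0}"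
      by (auto simp: P_def mv_inner inner_axis')
    have p1: "polyhedron {x::real^'n. \<forall>j\<in>UNIV. (- axis j 1) \<bullet> x \<le> (0::real)}"
      by (rule polyhedron_all_le) simp
    have p3: "polyhedron {x::real^'n. \<forall>j\<in>UNIV. axis j 1 \<bullet> x \<le> gam$j}"
      by (rule polyhedron_all_le) simp
    have p2: "polyhedron {x::real^'n. \<forall>i\<in>T. D$i \<bullet> x = 0}"
      by (rule polyhedron_all_eq) simp
    have polyP: "polyhedron P" unfolding eqP by (intro polyhedron_Int p1 p2 p3)
    have 0: "0 \<in> P" using assms(2) by (auto simp: P_def less_imp_le)
    have "\<exists>x\<in>P. \<forall>x'\<in>P. (1/2) * (norm (A *v x - a))\<^sup>2 \<le> (1/2) * (norm (A *v x' - a))\<^sup>2"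
    proof (rule min_coercive[OF polyhedron_imp_closed[OF polyP] 0, where B="\<Sum>j\<in>UNIV. gam$j"])
      show "continuous_on P (\<lambda>x. (1/2) * (norm (A *v x - a))\<^sup>2)"
        by (intro continuous_intros)
      fix x assume "x \<in> P"
      have "norm x \<le> (\<Sum>j\<in>UNIV. \<bar>x$j\<bar>)" by (rule norm_le_l1_cart)
      also have "\<dots> \<le> (\<Sum>j\<in>UNIV. gam$j)" using \<open>x\<in>P\<close> by (intro sum_mono) (auto simp: P_def)
      finally show "norm x \<le> (\<Sum>j\<in>UNIV. gam$j)" .
    qed
    then obtain x where x: "x \<in> P" "\<forall>x'\<in>P. (1/2) * (norm (A *v x - a))\<^sup>2 \<le> (1/2) * (norm (A *v x' - a))\<^sup>2" by blast
    show "\<exists>x\<in>box_set gam. (\<forall>i\<in>T. (D *v x) $ i = 0) \<and>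
          (\<forall>x'\<in>box_set gam. (\<forall>i\<in>T. (D *v x') $ i = 0) \<longrightarrow>
             1 / 2 * (norm (A *v x - a))\<^sup>2 \<le> 1 / 2 * (norm (A *v x' - a))\<^sup>2)"
    proof (rule bexI[where x=x], intro conjI ballI impI)
      show "x \<in> box_set gam" using x PS by auto
      show "(D *v x) $ i = 0" if "i \<in> T" for i using x PS that by auto
      fix x' assume "x' \<in> box_set gam" "\<forall>i\<in>T. (D *v x') $ i = 0"
      then have "x' \<in> P" using PS by blast
      then show "1 / 2 * (norm (A *v x - a))\<^sup>2 \<le> 1 / 2 * (norm (A *v x' - a))\<^sup>2"
        using x(2) by blast
    qed
  qed
qed


definition Cset :: "real^'n^'r \<Rightarrow> 'r set \<Rightarrow> (real^'n) set" where
  "Cset D T = {w. \<exists>z::real^'r. (\<forall>i\<in>T. z$i = 0) \<and> (\<forall>j. 0 \<le> (w + transpose D *v z)$j)}"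

lemma C_closed:
  fixes D :: "real^'n^'r" and T :: "'r set"
  shows "closed (Cset D T)"
proof -
  define P where "P = {x::real^('n + ('r + 'r)). (\<forall>k. 0 \<le> x$k) \<and> (\<forall>i\<in>T. x$Inr(Inl i) = 0 \<and> x$Inr(Inr i) = 0)}"
  define z1 where "z1 x = (\<chi> i. x$Inr(Inl i))" for x :: "real^('n + ('r + 'r))"
  define z2 where "z2 x = (\<chi> i. x$Inr(Inr i))" for x :: "real^('n + ('r + 'r))"
  define w0 where "w0 x = (\<chi> j. x$Inl j)" for x :: "real^('n + ('r + 'r))"
  define f where "f x = w0 x - transpose D *v (z1 x - z2 x)" for x
  have lin: "linear f"
    by (intro linearI) (simp_all add: f_def w0_def z1_def z2_def vec_eq_iff matrix_vector_mult_def
        sum.distrib algebra_simps sum_distrib_left sum_subtractf)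
  have eqP: "P = {x. \<forall>k\<in>UNIV. (- axis k 1) \<bullet> x \<le> (0::real)} \<inter> {x. \<forall>i\<in>T. axis (Inr (Inl i)) 1 \<bullet> x = 0}
       \<inter> {x. \<forall>i\<in>T. axis (Inr (Inr i)) 1 \<bullet> x = 0}"
    by (auto simp: P_def inner_axis')
  have p1: "polyhedron {x::real^('n + ('r + 'r)). \<forall>k\<in>UNIV. (- axis k 1) \<bullet> x \<le> (0::real)}"
    by (rule polyhedron_all_le) simp
  have p2: "polyhedron {x::real^('n + ('r + 'r)). \<forall>i\<in>T. axis (Inr (Inl i)) 1 \<bullet> x = 0}"
    by (rule polyhedron_all_eq) simp
  have p3: "polyhedron {x::real^('n + ('r + 'r)). \<forall>i\<in>T. axis (Inr (Inr i)) 1 \<bullet> x = 0}"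
    by (rule polyhedron_all_eq) simp
  have polyP: "polyhedron P" unfolding eqP by (intro polyhedron_Int p1 p2 p3)
  have conP: "conic P" unfolding conic_def P_def by auto
  have "Cset D T = f ` P"
  proof
    show "Cset D T \<subseteq> f ` P"
    proof
      fix w assume "w \<in> Cset D T"
      then obtain z where z: "\<forall>i\<in>T. z$i = 0" "\<forall>j. 0 \<le> (w + transpose D *v z)$j"
        by (auto simp: Cset_def)
      define x :: "real^('n + ('r + 'r))" where "x = (\<chi> k. case k of Inl j \<Rightarrow> (w + transpose D *v z)$j
          | Inr (Inl i) \<Rightarrow> max (z$i) 0 | Inr (Inr i) \<Rightarrow> max (-(z$i)) 0)"
      have zz: "z1 x - z2 x = z" by (simp add: vec_eq_iff z1_def z2_def x_def max_def)
      have ww: "w0 x = w + transpose D *v z" by (simp add: vec_eq_iff w0_def x_def)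
      have "x \<in> P" using z unfolding P_def x_def by (auto split: sum.split)
      moreover have "f x = w" by (simp add: f_def zz ww)
      ultimately show "w \<in> f ` P" by blast
    qed
    show "f ` P \<subseteq> Cset D T"
    proof
      fix w assume "w \<in> f ` P"
      then obtain x where x: "x \<in> P" "w = f x" by blast
      have "w + transpose D *v (z1 x - z2 x) = w0 x" by (simp add: x f_def)
      then show "w \<in> Cset D T" unfolding Cset_def using x(1)
        by (intro CollectI exI[where x="z1 x - z2 x"]) (auto simp: P_def z1_def z2_def w0_def)
    qed
  qed
  then show ?thesis using closed_image_cone[OF polyP conP _ lin] by (auto simp: P_def)
qed


lemma dual_orth:
  fixes A :: "real^'n^'m" and D :: "real^'n^'r" and a :: "real^'m" and mu :: "real^'r"
  assumes "\<forall>i. 0 \<le> mu $ i"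
  shows "has_global_min (\<lambda>(y, z). dual_obj_orth a mu y z) (dual_feas_orth A D)"
proof -
  have eq: "(\<lambda>(y, z). dual_obj_orth a mu y z) = (\<lambda>p. ((1/2) * (norm (fst p))\<^sup>2 + a \<bullet> fst p) + Psi0 mu (snd p))"
    by (auto simp: fun_eq_iff dual_obj_orth_def)
  show ?thesis unfolding eq
  proof (rule decomp[OF assms])
    fix T :: "'r set"
    define Y where "Y = (\<lambda>y. transpose A *v y) -` Cset D T"
    have clY: "closed Y" unfolding Y_def
      by (intro continuous_closed_vimage C_closed matrix_vector_mult_linear_continuous_at)
    have 0: "0 \<in> Y" by (auto simp: Y_def Cset_def intro!: exI[where x=0])
    have "\<exists>y\<in>Y. \<forall>y'\<in>Y. (1/2) * (norm y)\<^sup>2 + a \<bullet> y \<le> (1/2) * (norm y')\<^sup>2 + a \<bullet> y'"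
    proof (rule min_coercive[OF clY 0, where B="2 * norm a"])
      show "continuous_on Y (\<lambda>y. (1/2) * (norm y)\<^sup>2 + a \<bullet> y)" by (intro continuous_intros)
      fix y assume "(1/2) * (norm y)\<^sup>2 + a \<bullet> y \<le> (1/2) * (norm (0::real^'m))\<^sup>2 + a \<bullet> 0"
      then have "(1/2) * (norm y)\<^sup>2 + a \<bullet> y + 0 \<le> 0" by simp
      then show "norm y \<le> 2 * norm a" using coerc_q(1) by blast
    qed
    then obtain y where y: "y \<in> Y" "\<forall>y'\<in>Y. (1/2) * (norm y)\<^sup>2 + a \<bullet> y \<le> (1/2) * (norm y')\<^sup>2 + a \<bullet> y'"
      by blast
    then obtain z where z: "\<forall>i\<in>T. z$i = 0" "\<forall>j. 0 \<le> (transpose A *v y + transpose D *v z)$j"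
      by (auto simp: Y_def Cset_def)
    show "\<exists>p\<in>dual_feas_orth A D. (\<forall>i\<in>T. snd p $ i = 0) \<and>
          (\<forall>p'\<in>dual_feas_orth A D. (\<forall>i\<in>T. snd p' $ i = 0) \<longrightarrow>
            (1/2) * (norm (fst p))\<^sup>2 + a \<bullet> fst p \<le> (1/2) * (norm (fst p'))\<^sup>2 + a \<bullet> fst p')"
    proof (rule bexI[where x="(y, z)"], intro conjI ballI impI)
      show "(y, z) \<in> dual_feas_orth A D" using z by (simp add: dual_feas_orth_def)
      show "snd (y, z) $ i = 0" if "i \<in> T" for i using z that by simp
      fix p' assume p': "p' \<in> dual_feas_orth A D" "\<forall>i\<in>T. snd p' $ i = 0"
      then have "fst p' \<in> Y" unfolding Y_def Cset_def dual_feas_orth_def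
        by (cases p') auto
      then show "(1/2) * (norm (fst (y, z)))\<^sup>2 + a \<bullet> fst (y, z) \<le> (1/2) * (norm (fst p'))\<^sup>2 + a \<bullet> fst p'"
        using y(2) by simp
    qed
  qed
qed


lemma dual_box:
  fixes A :: "real^'n^'m" and D :: "real^'n^'r" and a :: "real^'m" and mu :: "real^'r"
    and gam :: "real^'n"
  assumes "\<forall>i. 0 \<le> mu $ i" and gam: "\<forall>j. gam $ j > 0"
  shows "has_global_min (\<lambda>(y, z). dual_obj_box A a D mu gam y z) UNIV"
proof -
  define h where "h p = (\<Sum>j\<in>UNIV. max (- (transpose A *v fst p) $ j - (transpose D *v snd p) $ j) 0 * gam $ j)"
    for p :: "(real^'m) \<times> (real^'r)"
  define q where "q y = (1/2) * (norm y)\<^sup>2 + a \<bullet> y" for y :: "real^'m"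
  have eq: "(\<lambda>(y, z). dual_obj_box A a D mu gam y z) = (\<lambda>p. (h p + q (fst p)) + Psi0 mu (snd p))"
    by (auto simp: fun_eq_iff dual_obj_box_def h_def q_def)
  show ?thesis unfolding eq
  proof (rule decomp[OF assms(1)])
    fix T :: "'r set"
    define E where "E = {p :: (real^'m) \<times> (real^'n). (\<forall>j. 0 \<le> snd p $ j)} \<inter>
        (\<lambda>p. transpose A *v fst p + snd p) -` Cset D T"
    define F where "F p = q (fst p) + (\<Sum>j\<in>UNIV. snd p $ j * gam $ j)" for p :: "(real^'m) \<times> (real^'n)"
    have clE: "closed E" unfolding E_def
    proof (intro closed_Int continuous_closed_vimage C_closed)
      show "closed {p :: (real^'m) \<times> (real^'n). \<forall>j. 0 \<le> snd p $ j}"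
        by (intro closed_Collect_all closed_Collect_le continuous_intros)
      show "continuous (at x) (\<lambda>p. transpose A *v fst p + snd p)" for x :: "(real^'m) \<times> (real^'n)"
      proof -
        have "isCont (\<lambda>p. transpose A *v fst p) x"
          by (rule isCont_o2[OF continuous_fst[OF continuous_ident] matrix_vector_mult_linear_continuous_at])
        then show ?thesis by (intro continuous_intros)
      qed
    qed
    have 0: "(0, 0) \<in> E" by (auto simp: E_def Cset_def intro!: exI[where x=0])
    define B where "B = 2 * norm a + (\<Sum>j\<in>UNIV. 2 * (norm a)\<^sup>2 / gam $ j)"
    have "\<exists>p\<in>E. \<forall>p'\<in>E. F p \<le> F p'"
    proof (rule min_coercive[OF clE 0, where B=B])
      show "continuous_on E F" unfolding F_def q_def by (intro continuous_intros)
      fix p assume pE: "p \<in> E" and Fp: "F p \<le> F (0, 0)"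
      obtain y s where p: "p = (y, s)" by (cases p)
      have s0: "\<forall>j. 0 \<le> s $ j" using pE p by (simp add: E_def)
      have t0: "0 \<le> s $ j * gam $ j" for j using s0 gam by (simp add: less_imp_le)
      have S0: "0 \<le> (\<Sum>j\<in>UNIV. s $ j * gam $ j)" using t0 by (simp add: sum_nonneg)
      have "(1/2) * (norm y)\<^sup>2 + a \<bullet> y + (\<Sum>j\<in>UNIV. s $ j * gam $ j) \<le> 0"
        using Fp by (simp add: F_def q_def p)
      note c = coerc_q[OF this S0]
      have sj: "s $ j \<le> 2 * (norm a)\<^sup>2 / gam $ j" for j
      proof -
        have "s $ j * gam $ j \<le> (\<Sum>j\<in>UNIV. s $ j * gam $ j)"
          by (rule member_le_sum) (use t0 in auto)
        then have "s $ j * gam $ j \<le> 2 * (norm a)\<^sup>2" using c(2) by linarith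
        then show ?thesis using gam by (simp add: pos_le_divide_eq)
      qed
      have "norm s \<le> (\<Sum>j\<in>UNIV. \<bar>s$j\<bar>)" by (rule norm_le_l1_cart)
      also have "\<dots> \<le> (\<Sum>j\<in>UNIV. 2 * (norm a)\<^sup>2 / gam $ j)"
        by (intro sum_mono) (use s0 sj in auto)
      finally have ns: "norm s \<le> (\<Sum>j\<in>UNIV. 2 * (norm a)\<^sup>2 / gam $ j)" .
      have "norm p \<le> norm y + norm s" unfolding p by (rule norm_Pair_le)
      then show "norm p \<le> B" using ns c(1) by (simp add: B_def)
    qed
    then obtain y s where ys: "(y, s) \<in> E" "\<forall>p'\<in>E. F (y, s) \<le> F p'" by auto
    then obtain z where z: "\<forall>i\<in>T. z$i = 0" "\<forall>j. 0 \<le> (transpose A *v y + s + transpose D *v z)$j"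
      and s0: "\<forall>j. 0 \<le> s $ j"
      by (auto simp: E_def Cset_def)
    have hle: "h (y, z) + q y \<le> F (y, s)"
    proof -
      have "h (y, z) \<le> (\<Sum>j\<in>UNIV. s $ j * gam $ j)" unfolding h_def
      proof (intro sum_mono mult_right_mono)
        fix j
        show "0 \<le> gam $ j" using gam by (simp add: less_imp_le)
        show "max (- (transpose A *v fst (y, z)) $ j - (transpose D *v snd (y, z)) $ j) 0 \<le> s $ j"
          using z(2) s0 by (simp add: max_def) (smt (verit))
      qed
      then show ?thesis by (simp add: F_def)
    qed
    show "\<exists>p\<in>UNIV. (\<forall>i\<in>T. snd p $ i = 0) \<and>
          (\<forall>p'\<in>UNIV. (\<forall>i\<in>T. snd p' $ i = 0) \<longrightarrow> h p + q (fst p) \<le> h p' + q (fst p'))"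
    proof (rule bexI[where x="(y, z)"], intro conjI ballI impI)
      show "(y, z) \<in> UNIV" by simp
      show "snd (y, z) $ i = 0" if "i \<in> T" for i using z that by simp
      fix p' :: "(real^'m) \<times> (real^'r)" assume p': "\<forall>i\<in>T. snd p' $ i = 0"
      obtain y' z' where pp: "p' = (y', z')" by (cases p')
      define s' where "s' = (\<chi> j. max (- (transpose A *v y') $ j - (transpose D *v z') $ j) 0)"
      have "(y', s') \<in> E" unfolding E_def Cset_def
        using p' pp by (auto simp: s'_def max_def intro!: exI[where x=z'])
      then have "F (y, s) \<le> F (y', s')" using ys(2) by blast
      also have "F (y', s') = h p' + q (fst p')" by (simp add: F_def h_def s'_def pp)
      finally show "h (y, z) + q (fst (y, z)) \<le> h p' + q (fst p')" using hle by simp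
    qed
  qed
qed

theorem mainTheorem9:
  fixes A :: "real^'n^'m" and D :: "real^'n^'r" and a :: "real^'m"
    and lam mu :: "real^'r"
  assumes "\<forall>i. lam $ i > 0" and "\<forall>i. mu $ i > 0"
  shows "(has_global_min (primal_obj A a D lam) nonneg_orthant
          \<and> has_global_min (\<lambda>(y, z). dual_obj_orth a mu y z) (dual_feas_orth A D))
       \<and> (\<forall>gam :: real^'n. (\<forall>j. gam $ j > 0) \<longrightarrow>
          has_global_min (primal_obj A a D lam) (box_set gam)
          \<and> has_global_min (\<lambda>(y, z). dual_obj_box A a D mu gam y z) UNIV)"
proof -
  have l: "\<forall>i. 0 \<le> lam $ i" and m: "\<forall>i. 0 \<le> mu $ i" using assms by (auto simp: less_imp_le)
  show ?thesis using primal_orth[OF l] dual_orth[OF m] primal_box[OF l] dual_box[OF m] by blast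
qed

end
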